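(* Let $q\ge2$, $n\ge1$, $m=n+1$, $R\in[m]$ and $r\equiv m\pmod R$ with $0\le r<R$. Then $$\max_{{\boldsymbol y}\in\Sigma_{q,R}^m}\mathsf{H}^{\mathsf{In}}_{1\text{-}\mathsf{Ins}}({\boldsymbol y})=\log_2 m-\frac1m\left(r\left\lceil\tfrac mR\right\rceil\log_2\left\lceil\tfrac mR\right\rceil+(R-r)\left\lfloor\tfrac mR\right\rfloor\log_2\left\lfloor\tfrac mR\right\rfloor\right),$$ and the maximum is attained only by balanced channel outputs.
   Context: $\Sigma_q=\{0,\dots,q-1\}$. For sequences ${\boldsymbol x}$ of length $\ell$ and ${\boldsymbol y}$ of length $N\ge\ell$, $\omega_{{\boldsymbol x}}({\boldsymbol y})$ is the number of index tuples $1\le i_1<\dots<i_\ell\le N$ with $y_{i_j}=x_j$. The $1$-insertion channel with input length $n$ maps ${\boldsymbol x}\in\Sigma_q^n$ to ${\boldsymbol y}\in\Sigma_q^{n+1}$ with probability $\omega_{{\boldsymbol x}}({\boldsymbol y})/((n+1)q)$; under uniform transmission ($X$ uniform on $\Sigma_q^n$), $\mathsf{H}^{\mathsf{In}}_{1\text{-}\mathsf{Ins}}({\boldsymbol y})=H(X\mid Y={\boldsymbol y})$ in bits, with posterior $P({\boldsymbol x}\mid {\boldsymbol y})=\Pr\{{\boldsymbol y}\mid{\boldsymbol x}\}/\sum_{{\boldsymbol x}'}\Pr\{{\boldsymbol y}\mid{\boldsymbol x}'\}$. A run is a maximal block of identical consecutive symbols; $\Sigma_{q,R}^m$ is the set of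 sequences in $\Sigma_q^m$ with exactly $R$ runs. A sequence in $\Sigma_{q,R}^m$ is balanced if it has $r$ runs of length $\lceil m/R\rceil$ and $R-r$ runs of length $\lfloor m/R\rfloor$, where $r\equiv m\pmod R$. Convention $0\log0=0$. *)

theory Defs
  imports Complex_Main "HOL-Library.Multiset"
begin

definition seqs :: "nat \<Rightarrow> nat \<Rightarrow> nat list set" where
  "seqs q m = {x. length x = m \<and> set x \<subseteq> {0..<q}}"

text \<open>omega_x(y): number of index tuples i_1 < ... < i_l (0-based) with y_{i_j} = x_j,
  i.e. number of index sets I of size l whose increasing enumeration reads x in y.\<close>
definition omega :: "nat list \<Rightarrow> nat list \<Rightarrow> nat" where
  "omega x y = card {I. I \<subseteq> {0..<length y} \<and> card I = length x \<and>
                        map (\<lambda>i. y ! i) (sorted_list_of_set I) = x}"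

definition ins_prob :: "nat \<Rightarrow> nat \<Rightarrow> nat list \<Rightarrow> nat list \<Rightarrow> real" where
  "ins_prob q n x y = real (omega x y) / (real (n + 1) * real q)"

text \<open>Posterior under uniform input distribution on Sigma_q^n.\<close>
definition posterior :: "nat \<Rightarrow> nat \<Rightarrow> nat list \<Rightarrow> nat list \<Rightarrow> real" where
  "posterior q n y x = ins_prob q n x y / (\<Sum>x'\<in>seqs q n. ins_prob q n x' y)"

definition H_in :: "nat \<Rightarrow> nat \<Rightarrow> nat list \<Rightarrow> real" where
  "H_in q n y = - (\<Sum>x\<in>seqs q n. (let p = posterior q n y x in
                                      if p = 0 then 0 else p * log 2 p))"

function run_lengths :: "nat list \<Rightarrow> nat list" where
  "run_lengths [] = []"
| "run_lengths (a # xs) =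
     length (takeWhile (\<lambda>b. b = a) (a # xs)) # run_lengths (dropWhile (\<lambda>b. b = a) xs)"
  by pat_completeness auto
termination
  by (relation "measure length") (auto simp: le_imp_less_Suc length_dropWhile_le)

definition num_runs :: "nat list \<Rightarrow> nat" where
  "num_runs y = length (run_lengths y)"

definition seqs_runs :: "nat \<Rightarrow> nat \<Rightarrow> nat \<Rightarrow> nat list set" where
  "seqs_runs q R m = {y \<in> seqs q m. num_runs y = R}"

definition balanced :: "nat \<Rightarrow> nat \<Rightarrow> nat list \<Rightarrow> bool" where
  "balanced R m y \<longleftrightarrow>
     mset (run_lengths y) =
       replicate_mset (m mod R) (nat \<lceil>real m / real R\<rceil>)
     + replicate_mset (R - m mod R) (nat \<lfloor>real m / real R\<rfloor>)"

end

theory Submission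
  imports Defs
begin


definition del :: "nat \<Rightarrow> nat list \<Rightarrow> nat list" where
  "del i y = take i y @ drop (Suc i) y"

definition Dl :: "nat list \<Rightarrow> nat list list" where
  "Dl y = map (\<lambda>i. del i y) [0..<length y]"

definition phi :: "nat \<Rightarrow> real" where
  "phi L = real L * log 2 (real L)"

definition T :: "'a list \<Rightarrow> real" where
  "T xs = (\<Sum>x\<in>set xs. phi (count_list xs x))"

lemma count_list_replicate: "count_list (replicate k u) x = (if x = u then k else 0)"
  by (induction k) auto

lemma T_decomp:
  assumes "k \<ge> 1" "inj h" "u \<notin> h ` set zs"
  shows "T (replicate k u @ map h zs) = phi k + T zs"
proof -
  have s: "set (replicate k u @ map h zs) = insert u (h ` set zs)" using assms(1) by auto
  have cu: "count_list (replicate k u @ map h zs) u = k"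
    using assms(3) by (simp add: count_list_replicate)
  have ch: "count_list (replicate k u @ map h zs) (h w) = count_list zs w" if "w \<in> set zs" for w
  proof -
    have "h w \<noteq> u" using assms(3) that by auto
    then show ?thesis by (simp add: count_list_replicate count_list_map_conv[OF assms(2)])
  qed
  have "T (replicate k u @ map h zs) = phi k + (\<Sum>x\<in>h ` set zs. phi (count_list (replicate k u @ map h zs) x))"
    unfolding T_def s using assms(3) cu by (simp add: sum.insert)
  also have "(\<Sum>x\<in>h ` set zs. phi (count_list (replicate k u @ map h zs) x)) = (\<Sum>w\<in>set zs. phi (count_list zs w))"
    by (subst sum.reindex) (use assms(2) ch in \<open>auto simp: inj_on_def inj_def\<close>)
  finally show ?thesis by (simp add: T_def)
qed

lemma del_rep: assumes "i < k"
  shows "del i (replicate k a @ z) = replicate (k-1) a @ z"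
proof -
  have t: "take i (replicate k a @ z) = replicate i a" using assms by (simp add: take_append min_def)
  have d: "drop (Suc i) (replicate k a @ z) = replicate (k - Suc i) a @ z" using assms by (simp add: drop_append)
  have "replicate i a @ replicate (k - Suc i) a = replicate (i + (k - Suc i)) a" by (simp only: replicate_add)
  also have "i + (k - Suc i) = k - 1" using assms by simp
  finally show ?thesis unfolding del_def t d by simp
qed

lemma del_rep2: "del (k + j) (replicate k a @ z) = replicate k a @ del j z"
  by (simp add: del_def take_append drop_append)

lemma upt_split: "[0..<k + l] = [0..<k] @ map (\<lambda>j. k + j) [0..<l]"
proof -
  have "[0..<k + l] = [0..<k] @ [k..<k + l]" by (rule upt_add_eq_append) simp
  moreover have "map (\<lambda>j. k + j) [0..<l] = [k..<k + l]"
    using map_add_upt[of k l] by (simp add: add.commute)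
  ultimately show ?thesis by simp
qed

lemma Dl_decomp:
  assumes "k \<ge> 1"
  shows "Dl (replicate k a @ z) = replicate k (replicate (k-1) a @ z) @ map ((@) (replicate k a)) (Dl z)"
proof -
  have u: "[0..<length (replicate k a @ z)] = [0..<k] @ map (\<lambda>j. k + j) [0..<length z]"
    using upt_split[of k "length z"] by simp
  have 1: "map (\<lambda>i. del i (replicate k a @ z)) [0..<k] = replicate k (replicate (k-1) a @ z)"
    by (rule nth_equalityI) (simp_all add: del_rep)
  have 2: "map (\<lambda>i. del i (replicate k a @ z)) (map (\<lambda>j. k + j) [0..<length z])
      = map ((@) (replicate k a)) (Dl z)"
    by (simp add: Dl_def del_rep2)
  show ?thesis unfolding Dl_def u map_append 1 2 ..
qed

lemma runs_rep: assumes "k > 0" "z = [] \<or> hd z \<noteq> a"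
  shows "run_lengths (replicate k a @ z) = k # run_lengths z"
proof -
  obtain k' where k: "k = Suc k'" using assms(1) by (cases k) auto
  have tw: "takeWhile (\<lambda>b. b = a) z = []" "dropWhile (\<lambda>b. b = a) z = z"
    using assms(2) by (cases z; simp)+
  have "takeWhile (\<lambda>b. b = a) (replicate k' a @ z) = replicate k' a"
    using tw by (subst takeWhile_append2) auto
  moreover have "dropWhile (\<lambda>b. b = a) (replicate k' a @ z) = z"
    using tw by (subst dropWhile_append2) auto
  ultimately show ?thesis by (simp add: k)
qed

lemma decomp: assumes "y \<noteq> []"
  shows "\<exists>k a z. k > 0 \<and> y = replicate k a @ z \<and> (z = [] \<or> hd z \<noteq> a)"
proof -
  obtain a xs where y: "y = a # xs" using assms by (cases y) auto
  let ?t = "takeWhile (\<lambda>b. b = a) y" and ?z = "dropWhile (\<lambda>b. b = a) y"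
  have "replicate (length ?t) a = ?t"
    by (rule replicate_length_same) (auto dest: set_takeWhileD)
  then have e: "y = replicate (length ?t) a @ ?z" by (metis takeWhile_dropWhile_id)
  have "length ?t > 0" using y by simp
  moreover have "?z = [] \<or> hd ?z \<noteq> a" using hd_dropWhile[of "\<lambda>b. b = a" y] by auto
  ultimately show ?thesis using e by blast
qed

lemma T_Dl: "T (Dl y) = (\<Sum>L\<leftarrow>run_lengths y. phi L)"
proof (induction "length y" arbitrary: y rule: less_induct)
  case less
  show ?case
  proof (cases "y = []")
    case True then show ?thesis by (simp add: Dl_def T_def)
  next
    case False
    then obtain k a z where kz: "k > 0" "y = replicate k a @ z" "z = [] \<or> hd z \<noteq> a"
      using decomp by blast
    have "length z < length y" using kz by simp
    note IH = less[OF this]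
    have nin: "replicate (k-1) a @ z \<notin> (@) (replicate k a) ` set (Dl z)"
    proof
      assume "replicate (k-1) a @ z \<in> (@) (replicate k a) ` set (Dl z)"
      then obtain w where w: "replicate (k-1) a @ z = replicate k a @ w" "w \<in> set (Dl z)" by auto
      then have "z \<noteq> []" by (auto simp: Dl_def)
      then have "hd z \<noteq> a" using kz by simp
      have "(replicate (k-1) a @ z) ! (k-1) = hd z" using \<open>z \<noteq> []\<close> by (simp add: nth_append hd_conv_nth)
      moreover have "(replicate k a @ w) ! (k-1) = a" using kz by (simp add: nth_append)
      ultimately show False using w(1) \<open>hd z \<noteq> a\<close> by simp
    qed
    have "T (Dl y) = phi k + T (Dl z)"
    proof -
      have "Dl y = replicate k (replicate (k-1) a @ z) @ map ((@) (replicate k a)) (Dl z)"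
        using Dl_decomp[of k a z] kz by simp
      then show ?thesis using kz(1) nin by (simp add: T_decomp inj_def)
    qed
    then show ?thesis using IH kz runs_rep by simp
  qed
qed




lemma sls_del: assumes "i < m"
  shows "sorted_list_of_set ({0..<m} - {i}) = [0..<i] @ [Suc i..<m]"
proof -
  have "sorted_wrt (<) ([0..<i] @ [Suc i..<m]) \<and> set ([0..<i] @ [Suc i..<m]) = {0..<m} - {i}
        \<and> length ([0..<i] @ [Suc i..<m]) = card ({0..<m} - {i})"
    using assms by (auto simp: sorted_wrt_append)
  then show ?thesis by (subst sorted_list_of_set_unique[symmetric]) auto
qed

lemma map_nth_del: assumes "i < length y"
  shows "map (\<lambda>j. y ! j) ([0..<i] @ [Suc i..<length y]) = del i y"
  unfolding del_def
proof (rule nth_equalityI)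
  show "length (map ((!) y) ([0..<i] @ [Suc i..<length y])) = length (take i y @ drop (Suc i) y)"
    using assms by simp
  fix j assume "j < length (map ((!) y) ([0..<i] @ [Suc i..<length y]))"
  then show "map ((!) y) ([0..<i] @ [Suc i..<length y]) ! j = (take i y @ drop (Suc i) y) ! j"
    using assms by (auto simp: nth_append)
qed

lemma count_Dl: "count_list (Dl y) x = card {i. i < length y \<and> del i y = x}"
  unfolding Dl_def count_list_eq_length_filter length_filter_conv_card
  by (rule arg_cong[where f=card]) auto

lemma omega_del:
  assumes "length y = Suc n" "length x = n"
  shows "omega x y = count_list (Dl y) x"
proof -
  let ?m = "length y"
  let ?S = "{I. I \<subseteq> {0..<?m} \<and> card I = length x \<and> map (\<lambda>i. y ! i) (sorted_list_of_set I) = x}"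
  have S: "?S = (\<lambda>i. {0..<?m} - {i}) ` {i. i < ?m \<and> del i y = x}"
  proof (rule set_eqI, rule iffI)
    fix I assume "I \<in> ?S"
    then have I: "I \<subseteq> {0..<?m}" "card I = n" "map (\<lambda>i. y ! i) (sorted_list_of_set I) = x"
      using assms by auto
    have "card ({0..<?m} - I) = 1"
      using I assms by (subst card_Diff_subset) (auto intro: finite_subset)
    then obtain i where i: "{0..<?m} - I = {i}" by (rule card_1_singletonE)
    have im: "i < ?m" using i by auto
    have Ie: "I = {0..<?m} - {i}" using i I(1) by blast
    have "del i y = x" using I(3) unfolding Ie sls_del[OF im] map_nth_del[OF im] .
    then show "I \<in> (\<lambda>i. {0..<?m} - {i}) ` {i. i < ?m \<and> del i y = x}" using Ie im by blast
  next
    fix I assume "I \<in> (\<lambda>i. {0..<?m} - {i}) ` {i. i < ?m \<and> del i y = x}"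
    then obtain i where i: "i < ?m" "del i y = x" "I = {0..<?m} - {i}" by auto
    show "I \<in> ?S" using i assms sls_del[OF i(1)] map_nth_del[OF i(1)] by auto
  qed
  have inj: "inj_on (\<lambda>i. {0..<?m} - {i}) {i. i < ?m \<and> del i y = x}"
  proof (rule inj_onI)
    fix i j assume ij: "i \<in> {i. i < ?m \<and> del i y = x}" "j \<in> {i. i < ?m \<and> del i y = x}"
      "{0..<?m} - {i} = {0..<?m} - {j}"
    have "i \<notin> {0..<?m} - {i}" by simp
    then have "i \<notin> {0..<?m} - {j}" using ij(3) by simp
    then show "i = j" using ij(1) by simp
  qed
  show ?thesis unfolding omega_def S card_image[OF inj] count_Dl ..
qed

lemma finite_seqs: "finite (seqs q n)"
proof -
  have "seqs q n = {xs. set xs \<subseteq> {0..<q} \<and> length xs = n}" by (auto simp: seqs_def)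
  then show ?thesis using finite_lists_length_eq[of "{0..<q}" n] by simp
qed

lemma set_Dl: assumes "y \<in> seqs q (Suc n)" shows "set (Dl y) \<subseteq> seqs q n"
proof
  fix x assume "x \<in> set (Dl y)"
  then obtain i where i: "i < length y" "x = del i y" by (auto simp: Dl_def)
  have "set x \<subseteq> set y" using i(2) set_take_subset set_drop_subset unfolding del_def by fastforce
  then show "x \<in> seqs q n" using assms i by (auto simp: seqs_def del_def)
qed

lemma H_formula:
  assumes "y \<in> seqs q (Suc n)" "q \<ge> 1"
  shows "H_in q n y = log 2 (real (Suc n)) - (1 / real (Suc n)) * T (Dl y)"
proof -
  let ?m = "Suc n"
  let ?D = "Dl y"
  let ?c = "\<lambda>x. real (count_list ?D x)"
  have ly: "length y = ?m" using assms by (simp add: seqs_def)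
  have lD: "length ?D = ?m" using ly by (simp add: Dl_def)
  have sD: "set ?D \<subseteq> seqs q n" using set_Dl[OF assms(1)] .
  have ip: "ins_prob q n x y = ?c x / (real ?m * real q)" if "x \<in> seqs q n" for x
    using that ly omega_del[of y n x] by (simp add: ins_prob_def seqs_def)
  have sumc: "(\<Sum>x\<in>seqs q n. count_list ?D x) = ?m"
    using sum_count_set[OF sD finite_seqs] lD by simp
  have sumc2: "(\<Sum>x\<in>set ?D. ?c x) = real ?m"
    using sum_count_set[of ?D "set ?D"] lD by (simp flip: of_nat_sum)
  have sip: "(\<Sum>x'\<in>seqs q n. ins_prob q n x' y) = 1 / real q"
  proof -
    have "(\<Sum>x'\<in>seqs q n. ins_prob q n x' y) = (\<Sum>x'\<in>seqs q n. ?c x') / (real ?m * real q)"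
      by (simp add: ip sum_divide_distrib)
    also have "(\<Sum>x'\<in>seqs q n. ?c x') = real ?m" using sumc by (simp flip: of_nat_sum)
    finally show ?thesis using assms(2) by simp
  qed
  have post: "posterior q n y x = ?c x / real ?m" if "x \<in> seqs q n" for x
    using assms(2) by (simp add: posterior_def sip ip[OF that])
  have "H_in q n y = - (\<Sum>x\<in>seqs q n. (if ?c x / real ?m = 0 then 0 else ?c x / real ?m * log 2 (?c x / real ?m)))"
    unfolding H_in_def Let_def by (intro arg_cong[where f=uminus] sum.cong refl) (simp add: post)
  also have "(\<Sum>x\<in>seqs q n. (if ?c x / real ?m = 0 then 0 else ?c x / real ?m * log 2 (?c x / real ?m)))
      = (\<Sum>x\<in>set ?D. ?c x / real ?m * log 2 (?c x / real ?m))"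
  proof (rule sum.mono_neutral_cong_right[OF finite_seqs sD])
    show "\<forall>x\<in>seqs q n - set ?D. (if ?c x / real ?m = 0 then 0 else ?c x / real ?m * log 2 (?c x / real ?m)) = 0"
      by auto
    show "(if ?c x / real ?m = 0 then 0 else ?c x / real ?m * log 2 (?c x / real ?m)) = ?c x / real ?m * log 2 (?c x / real ?m)"
      if "x \<in> set ?D" for x by auto
  qed
  also have "(\<Sum>x\<in>set ?D. ?c x / real ?m * log 2 (?c x / real ?m))
      = (\<Sum>x\<in>set ?D. (1 / real ?m) * phi (count_list ?D x) - log 2 (real ?m) * (?c x / real ?m))"
  proof (rule sum.cong[OF refl])
    fix x assume "x \<in> set ?D"
    then have "count_list ?D x > 0" using count_list_0_iff[of ?D x] by simp
    then show "?c x / real ?m * log 2 (?c x / real ?m) = (1 / real ?m) * phi (count_list ?D x) - log 2 (real ?m) * (?c x / real ?m)"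
      by (simp add: phi_def log_divide algebra_simps)
  qed
  also have "\<dots> = (1 / real ?m) * T ?D - log 2 (real ?m) * ((\<Sum>x\<in>set ?D. ?c x) / real ?m)"
    by (simp add: sum_subtractf T_def sum_distrib_left sum_divide_distrib)
  finally show ?thesis using sumc2 by simp
qed




definition dphi :: "nat \<Rightarrow> real" where "dphi a = phi (Suc a) - phi a"

lemma ln_lt: "0 < (x::real) \<Longrightarrow> x \<noteq> 1 \<Longrightarrow> ln x < x - 1"
  using ln_le_minus_one ln_eq_minus_one by fastforce

lemma convex_ln: assumes "(a::real) \<ge> 1"
  shows "2 * (a+1) * ln (a+1) < a * ln a + (a+2) * ln (a+2)"
proof -
  have e1: "ln a = ln (a+1) - ln ((a+1)/a)" using assms by (simp add: ln_div)
  have l1: "ln ((a+1)/a) < (a+1)/a - 1" using assms by (intro ln_lt) (auto simp: field_simps)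
  have "(a+1)/a - 1 = 1/a" using assms by (simp add: field_simps)
  then have "a * ln ((a+1)/a) < 1" using l1 assms by (simp add: field_simps)
  then have i1: "a * ln a > a * ln (a+1) - 1" unfolding e1 by (simp add: algebra_simps)
  have e2: "ln (a+2) = ln (a+1) - ln ((a+1)/(a+2))" using assms by (simp add: ln_div)
  have l2: "ln ((a+1)/(a+2)) < (a+1)/(a+2) - 1" using assms by (intro ln_lt) (auto simp: field_simps)
  have "(a+1)/(a+2) - 1 = -1/(a+2)" using assms by (simp add: field_simps)
  then have "(a+2) * ln ((a+1)/(a+2)) < -1" using l2 assms by (simp add: field_simps)
  then have i2: "(a+2) * ln (a+2) > (a+2) * ln (a+1) + 1" unfolding e2 by (simp add: algebra_simps)
  show ?thesis using i1 i2 by (simp add: algebra_simps)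
qed

lemma dphi_step: "dphi a < dphi (Suc a)"
proof (cases "a = 0")
  case True then show ?thesis by (simp add: dphi_def phi_def)
next
  case False
  then have a: "real a \<ge> 1" by simp
  have "2 * (real a+1) * ln (real a+1) < real a * ln (real a) + (real a+2) * ln (real a+2)"
    using convex_ln[OF a] .
  then have "2 * (real a+1) * ln (real a+1) / ln 2 < (real a * ln (real a) + (real a+2) * ln (real a+2)) / ln 2"
    by (intro divide_strict_right_mono) auto
  then show ?thesis by (simp add: dphi_def phi_def log_def add_divide_distrib algebra_simps)
qed

lemma dphi_mono: "strict_mono dphi" using dphi_step strict_mono_Suc_iff by blast

lemma up: "phi (a + j) \<ge> phi a + real j * dphi a \<and> (j \<ge> 2 \<longrightarrow> phi (a + j) > phi a + real j * dphi a)"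
proof (induction j)
  case 0 then show ?case by simp
next
  case (Suc j)
  have e: "phi (a + Suc j) = phi (a + j) + dphi (a + j)" by (simp add: dphi_def)
  have "dphi (a + j) \<ge> dphi a" using dphi_mono by (simp add: strict_mono_less_eq)
  moreover have "j \<ge> 1 \<Longrightarrow> dphi (a + j) > dphi a" using dphi_mono by (simp add: strict_mono_less)
  ultimately show ?case using Suc e by (cases "j = 0") (auto simp: algebra_simps)
qed

lemma down: "j \<le> a \<Longrightarrow> phi (a - j) \<ge> phi a - real j * dphi a \<and> (j \<ge> 1 \<longrightarrow> phi (a - j) > phi a - real j * dphi a)"
proof (induction j)
  case 0 then show ?case by simp
next
  case (Suc j)
  have e: "phi (a - j) = phi (a - Suc j) + dphi (a - Suc j)"
    using Suc.prems by (simp add: dphi_def Suc_diff_Suc)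
  have "dphi (a - Suc j) < dphi a" using dphi_mono Suc.prems by (simp add: strict_mono_less)
  then show ?case using Suc e by (auto simp: algebra_simps)
qed

definition gap :: "nat \<Rightarrow> nat \<Rightarrow> real" where
  "gap f L = phi L - phi f - (real L - real f) * dphi f"

lemma gap_nonneg: "gap f L \<ge> 0"
proof (cases "L \<ge> f")
  case True
  then obtain j where "L = f + j" using le_Suc_ex by blast
  then show ?thesis using up[of f j] by (simp add: gap_def)
next
  case False
  then obtain j where j: "L = f - j" "j \<le> f" "j \<ge> 1" by (intro that[of "f - L"]) auto
  then have "real L - real f = - real j" by simp
  then show ?thesis using down[of j f] j by (simp add: gap_def)
qed

lemma gap_zero: "gap f L = 0 \<Longrightarrow> L = f \<or> L = Suc f"
proof (rule ccontr)
  assume g: "gap f L = 0" and n: "\<not> (L = f \<or> L = Suc f)"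
  show False
  proof (cases "L \<ge> f")
    case True
    then obtain j where j: "L = f + j" using le_Suc_ex by blast
    with n have "j \<ge> 2" by auto
    then show False using up[of f j] g j by (simp add: gap_def)
  next
    case False
    then obtain j where j: "L = f - j" "j \<le> f" "j \<ge> 1" by (intro that[of "f - L"]) auto
    then have "real L - real f = - real j" by simp
    then show False using down[of j f] j g by (simp add: gap_def)
  qed
qed

lemma sum_gap: "(\<Sum>L\<leftarrow>Ls. phi L) = (\<Sum>L\<leftarrow>Ls. gap f L) + real (length Ls) * phi f
   + (real (sum_list Ls) - real (length Ls) * real f) * dphi f"
  by (induction Ls) (auto simp: gap_def algebra_simps)

lemma bound:
  assumes "length Ls = R" "sum_list Ls = m" "R \<ge> 1"
  shows "(\<Sum>L\<leftarrow>Ls. phi L) = (\<Sum>L\<leftarrow>Ls. gap (m div R) L)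
           + (real (m mod R) * phi (Suc (m div R)) + real (R - m mod R) * phi (m div R))"
proof -
  have mr: "m mod R \<le> R" using assms(3) by (simp add: order_less_imp_le)
  have "real (sum_list Ls) - real (length Ls) * real (m div R) = real (m mod R)"
    using assms by (metis add_diff_cancel_left' div_mult_mod_eq mult.commute of_nat_add of_nat_mult)
  then show ?thesis using sum_gap[of Ls "m div R"] assms mr by (simp add: dphi_def of_nat_diff algebra_simps)
qed

lemma bound_eq:
  assumes "length Ls = R" "sum_list Ls = m" "R \<ge> 1" "(\<Sum>L\<leftarrow>Ls. gap (m div R) L) = 0"
  shows "mset Ls = replicate_mset (m mod R) (Suc (m div R)) + replicate_mset (R - m mod R) (m div R)"
proof -
  let ?f = "m div R"
  have "\<forall>x\<in>set (map (gap ?f) Ls). x = 0"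
    using assms(4) by (subst sum_list_nonneg_eq_0_iff[symmetric]) (auto simp: gap_nonneg)
  then have s: "\<forall>L\<in>set Ls. L = ?f \<or> L = Suc ?f" using gap_zero by auto
  define a where "a = count (mset Ls) (Suc ?f)"
  define b where "b = count (mset Ls) ?f"
  have M: "mset Ls = replicate_mset a (Suc ?f) + replicate_mset b ?f"
  proof (rule multiset_eqI)
    fix x show "count (mset Ls) x = count (replicate_mset a (Suc ?f) + replicate_mset b ?f) x"
      using s by (cases "x = ?f"; cases "x = Suc ?f") (auto simp: a_def b_def count_mset count_list_0_iff)
  qed
  have sz: "a + b = R" using arg_cong[OF M, of size] assms(1) by simp
  have sm: "a * Suc ?f + b * ?f = m" using arg_cong[OF M, of sum_mset] assms(2) by (simp add: sum_mset_sum_list)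
  have "a + R * ?f = m" using sz sm by (simp add: algebra_simps) (metis add.commute add_mult_distrib)
  then have "a = m mod R" by (metis add_right_cancel mod_div_mult_eq mult.commute)
  moreover have "b = R - m mod R" using sz calculation by simp
  ultimately show ?thesis using M by simp
qed




fun mk :: "nat list \<Rightarrow> nat \<Rightarrow> nat list" where
  "mk [] a = []"
| "mk (L # Ls) a = replicate L a @ mk Ls (1 - a)"

lemma mk_props: "a \<le> 1 \<Longrightarrow> 0 \<notin> set Ls \<Longrightarrow>
   run_lengths (mk Ls a) = Ls \<and> length (mk Ls a) = sum_list Ls \<and> set (mk Ls a) \<subseteq> {0,1}
   \<and> (Ls \<noteq> [] \<longrightarrow> hd (mk Ls a) = a)"
proof (induction Ls arbitrary: a)
  case Nil then show ?case by simp
next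
  case (Cons L Ls)
  have IH: "run_lengths (mk Ls (1-a)) = Ls \<and> length (mk Ls (1-a)) = sum_list Ls \<and> set (mk Ls (1-a)) \<subseteq> {0,1}
   \<and> (Ls \<noteq> [] \<longrightarrow> hd (mk Ls (1-a)) = 1 - a)" using Cons by simp
  have L: "L > 0" using Cons.prems by auto
  have "mk Ls (1-a) = [] \<or> hd (mk Ls (1-a)) \<noteq> a"
  proof (cases "Ls = []")
    case False
    have "1 - a \<noteq> a" using Cons.prems by arith
    then show ?thesis using IH False by metis
  qed simp
  then have "run_lengths (mk (L # Ls) a) = L # Ls" using runs_rep[OF L] IH by simp
  moreover have "set (mk (L # Ls) a) \<subseteq> {0,1}" using IH Cons.prems by auto
  ultimately show ?case using IH L by auto
qed

lemma runs_sum: "sum_list (run_lengths y) = length y \<and> 0 \<notin> set (run_lengths y)"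
proof (induction "length y" arbitrary: y rule: less_induct)
  case less
  show ?case
  proof (cases "y = []")
    case False
    then obtain k a z where kz: "k > 0" "y = replicate k a @ z" "z = [] \<or> hd z \<noteq> a"
      using decomp by blast
    have "length z < length y" using kz by simp
    then show ?thesis using less kz runs_rep by auto
  qed simp
qed

lemma H_runs:
  assumes "y \<in> seqs q (Suc n)" "q \<ge> 1"
  shows "H_in q n y = log 2 (real (Suc n)) - (1 / real (Suc n)) * (\<Sum>L\<leftarrow>run_lengths y. phi L)"
  using H_formula[OF assms] T_Dl by simp

theorem lemma9:
  fixes q n m R r :: nat
  assumes "q \<ge> 2" and "n \<ge> 1" and "m = n + 1"
    and "1 \<le> R" and "R \<le> m" and "r = m mod R"
  shows "Max (H_in q n ` seqs_runs q R m) =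
           log 2 (real m) - (1 / real m) *
             (real r * real (nat \<lceil>real m / real R\<rceil>) * log 2 (real (nat \<lceil>real m / real R\<rceil>))
              + real (R - r) * real (nat \<lfloor>real m / real R\<rfloor>) * log 2 (real (nat \<lfloor>real m / real R\<rfloor>)))
       \<and> (\<forall>y \<in> seqs_runs q R m. H_in q n y = Max (H_in q n ` seqs_runs q R m) \<longrightarrow> balanced R m y)"
proof -
  define f where "f = m div R"
  have fl: "nat \<lfloor>real m / real R\<rfloor> = f" unfolding f_def
    by (metis floor_divide_of_nat_eq nat_int)
  have cl: "nat \<lceil>real m / real R\<rceil> = Suc f" if "r > 0"
  proof -
    have md: "real m = real R * real f + real r" unfolding f_def assms(6)
      by (metis div_mult_mod_eq mult.commute of_nat_add of_nat_mult)
    have "r < R" using assms(4,6) by simp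
    have Rp: "real R > 0" using assms(4) by simp
    have "real m / real R = real f + real r / real R" using md Rp by (simp add: field_simps)
    moreover have "real r / real R < 1" "real r / real R > 0" using \<open>r < R\<close> that Rp by auto
    ultimately have "\<lceil>real m / real R\<rceil> = int (Suc f)" by (subst ceiling_eq_iff) auto
    then show ?thesis by simp
  qed
  define B where "B = real r * phi (Suc f) + real (R - r) * phi f"
  define F where "F = log 2 (real m) - (1 / real m) * B"
  have FF: "log 2 (real m) - (1 / real m) *
             (real r * real (nat \<lceil>real m / real R\<rceil>) * log 2 (real (nat \<lceil>real m / real R\<rceil>))
              + real (R - r) * real (nat \<lfloor>real m / real R\<rfloor>) * log 2 (real (nat \<lfloor>real m / real R\<rfloor>))) = F"
    using cl unfolding F_def B_def fl phi_def by (cases "r = 0") auto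
  have mS: "m = Suc n" using assms(3) by simp
  have q1: "q \<ge> 1" using assms(1) by simp
  have Hy: "H_in q n y = log 2 (real m) - (1 / real m) * (\<Sum>L\<leftarrow>Ls. gap f L) - (1 / real m) * B"
    if "y \<in> seqs_runs q R m" "Ls = run_lengths y" for y Ls
  proof -
    have ys: "y \<in> seqs q (Suc n)" using that mS by (simp add: seqs_runs_def)
    have "length Ls = R" "sum_list Ls = m" using that runs_sum[of y]
      by (auto simp: seqs_runs_def num_runs_def seqs_def)
    then have "(\<Sum>L\<leftarrow>Ls. phi L) = (\<Sum>L\<leftarrow>Ls. gap f L) + B"
      using bound[of Ls R m] assms(4,6) unfolding B_def f_def by simp
    then show ?thesis using H_runs[OF ys q1] that mS by (simp add: algebra_simps)
  qed
  have fin: "finite (seqs_runs q R m)"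
    by (rule finite_subset[OF _ finite_seqs[of q m]]) (auto simp: seqs_runs_def)
  have le: "H_in q n y \<le> F" if "y \<in> seqs_runs q R m" for y
  proof -
    have "(\<Sum>L\<leftarrow>run_lengths y. gap f L) \<ge> 0" by (intro sum_list_nonneg) (auto simp: gap_nonneg)
    then show ?thesis using Hy[OF that refl] mS unfolding F_def by (simp add: divide_nonneg_nonneg)
  qed
  define Lb where "Lb = replicate r (Suc f) @ replicate (R - r) f"
  have f1: "f \<ge> 1" unfolding f_def using div_le_mono[of R m R] assms(4,5) by simp
  have Lb0: "0 \<notin> set Lb" using f1 by (auto simp: Lb_def)
  define y0 where "y0 = mk Lb 0"
  have P0: "run_lengths y0 = Lb \<and> length y0 = sum_list Lb \<and> set y0 \<subseteq> {0,1}"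
    using mk_props[of 0 Lb] Lb0 unfolding y0_def by simp
  have rR: "r \<le> R" using assms(4,6) by (simp add: order_less_imp_le)
  have sLb: "sum_list Lb = m"
  proof -
    have "sum_list Lb = r * Suc f + (R - r) * f" by (simp add: Lb_def sum_list_replicate)
    also have "\<dots> = R * f + r" using rR by (simp add: algebra_simps diff_mult_distrib)
    also have "\<dots> = m" unfolding f_def assms(6) by simp
    finally show ?thesis .
  qed
  have y0S: "y0 \<in> seqs_runs q R m"
    using P0 sLb rR assms(1) by (auto simp: seqs_runs_def seqs_def num_runs_def Lb_def)
  have gap0: "(\<Sum>L\<leftarrow>Lb. gap f L) = 0"
    by (simp add: Lb_def gap_def dphi_def algebra_simps sum_list_replicate)
  have Hy0: "H_in q n y0 = F" using Hy[OF y0S] P0 gap0 unfolding F_def by simp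
  have Mx: "Max (H_in q n ` seqs_runs q R m) = F"
    using fin le y0S Hy0 by (intro Max_eqI) auto
  have bal: "balanced R m y" if "y \<in> seqs_runs q R m" "H_in q n y = Max (H_in q n ` seqs_runs q R m)" for y
  proof -
    have g: "(\<Sum>L\<leftarrow>run_lengths y. gap f L) = 0"
      using Hy[OF that(1) refl] that(2) Mx mS unfolding F_def by simp
    have "length (run_lengths y) = R" "sum_list (run_lengths y) = m" using that runs_sum[of y]
      by (auto simp: seqs_runs_def num_runs_def seqs_def)
    then have M: "mset (run_lengths y) = replicate_mset r (Suc f) + replicate_mset (R - r) f"
      using bound_eq[of "run_lengths y" R m] g assms(4,6) unfolding f_def by simp
    show ?thesis
    proof (cases "r = 0")
      case True then show ?thesis using M fl assms(6) by (simp add: balanced_def)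
    next
      case False then show ?thesis using M fl cl assms(6) by (simp add: balanced_def)
    qed
  qed
  have "\<forall>y \<in> seqs_runs q R m. H_in q n y = Max (H_in q n ` seqs_runs q R m) \<longrightarrow> balanced R m y"
    using bal by blast
  then show ?thesis using trans[OF Mx FF[symmetric]] by (intro conjI)
qed


end
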